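(* Let $\ell$ be a $c$-approximate pseudo-metric ($c\ge1$) and $\mathcal{H}\subseteq\mathcal{Y}^{\mathcal{X}}$ with $\operatorname{diam}(\mathcal{H})\le1$. Suppose there are constants $A\ge1$, $p\ge1$ with $N(\mathcal{H},\varepsilon)\le (A/\varepsilon)^p$ for all $\varepsilon\in(0,1]$. Then $\Phi(\mathcal{H})\le p(\log_2A+1/\ln2)$ and $\mathbb{D}_{\mathrm{onl}}(\mathcal{H})\le 4cp(\log_2A+1/\ln 2)$.
   Context: $c$-approximate pseudo-metric: $\ell(y,y)=0$, symmetry, $\ell(y_1,y_2)\le c(\ell(y_1,y_3)+\ell(y_2,y_3))$. $d_\ell(f,g)=\sup_x\ell(f(x),g(x))$; $\operatorname{diam}(\mathcal{H})=\sup_{f,g\in\mathcal H}d_\ell(f,g)$; $N(U,\varepsilon)$ minimal size of $S\subseteq\mathcal{H}$ with every $u\in U$ within $d_\ell$-distance $\le\varepsilon$ of $S$; $\Phi(U)=\int_0^{\operatorname{diam}(\mathcal{H})}\log_2N(U,\varepsilon)d\varepsilon$. Scaled Littlestone tree of depth $D\le\infty$: internal nodes $u\in\{0,1\}^{<D}$ labeled $x_u\in\mathcal X$, edges labeled $s_{u,0},s_{u,1}\in\mathcal{Y}$, gap $\gamma_u=\ell(s_{u,0},s_{u,1})$; realizable by $\mathcal{H}$ if for every branch $b$ and finite $n\le D$ some $h\in\mathcal{H}$ has $h(x_{b_{\le t}})=s_{b_{\le t},b_{t+1}}$ for $t<n$. $\mathbb{D}_{\mathrm{onl}}(\mathcal{H})=\sup_{\mathcal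 T}\inf_b\sum_t\gamma_{b_{\le t}}$ over realizable trees $\mathcal T$ and their branches $b$. *)

theory Defs
  imports "HOL-Analysis.Analysis"
begin

definition approx_pseudo_metric :: "real \<Rightarrow> ('y \<Rightarrow> 'y \<Rightarrow> real) \<Rightarrow> bool" where
  "approx_pseudo_metric c L \<longleftrightarrow>
     (\<forall>y. L y y = 0) \<and> (\<forall>y1 y2. L y1 y2 = L y2 y1) \<and>
     (\<forall>y1 y2 y3. L y1 y2 \<le> c * (L y1 y3 + L y2 y3))"

definition dist_loss :: "('y \<Rightarrow> 'y \<Rightarrow> real) \<Rightarrow> ('x \<Rightarrow> 'y) \<Rightarrow> ('x \<Rightarrow> 'y) \<Rightarrow> ereal" where
  "dist_loss L f g = (SUP x. ereal (L (f x) (g x)))"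

definition diam_loss :: "('y \<Rightarrow> 'y \<Rightarrow> real) \<Rightarrow> ('x \<Rightarrow> 'y) set \<Rightarrow> ereal" where
  "diam_loss L H = (SUP f\<in>H. SUP g\<in>H. dist_loss L f g)"

definition covnum :: "('y \<Rightarrow> 'y \<Rightarrow> real) \<Rightarrow> ('x \<Rightarrow> 'y) set \<Rightarrow> ('x \<Rightarrow> 'y) set \<Rightarrow> real \<Rightarrow> ereal" where
  "covnum L H U \<epsilon> =
     (INF S\<in>{S. finite S \<and> S \<subseteq> H \<and> (\<forall>u\<in>U. \<exists>s\<in>S. dist_loss L u s \<le> ereal \<epsilon>)}.
        ereal (real (card S)))"

definition log2_ext :: "ereal \<Rightarrow> ennreal" where
  "log2_ext N = (if N = \<infinity> then \<infinity> else ennreal (log 2 (real_of_ereal N)))"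

definition Phi :: "('y \<Rightarrow> 'y \<Rightarrow> real) \<Rightarrow> ('x \<Rightarrow> 'y) set \<Rightarrow> ('x \<Rightarrow> 'y) set \<Rightarrow> ennreal" where
  "Phi L H U = (\<integral>\<^sup>+ \<epsilon>\<in>{\<epsilon>::real. 0 \<le> \<epsilon> \<and> ereal \<epsilon> \<le> diam_loss L H}.
                     log2_ext (covnum L H U \<epsilon>) \<partial>lborel)"

definition pref :: "(nat \<Rightarrow> bool) \<Rightarrow> nat \<Rightarrow> bool list" where
  "pref b t = map b [0..<t]"

text \<open>Scaled Littlestone tree of depth D: nodes are bool lists of length < D,
  x labels the nodes, s u i labels the edge from u to child i.\<close>
definition realizable_tree ::
  "('x \<Rightarrow> 'y) set \<Rightarrow> enat \<Rightarrow> (bool list \<Rightarrow> 'x) \<Rightarrow> (bool list \<Rightarrow> bool \<Rightarrow> 'y) \<Rightarrow> bool" where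
  "realizable_tree H D x s \<longleftrightarrow>
     (\<forall>b::nat \<Rightarrow> bool. \<forall>n::nat. enat n \<le> D \<longrightarrow>
        (\<exists>h\<in>H. \<forall>t<n. h (x (pref b t)) = s (pref b t) (b t)))"

definition branch_value ::
  "('y \<Rightarrow> 'y \<Rightarrow> real) \<Rightarrow> enat \<Rightarrow> (bool list \<Rightarrow> bool \<Rightarrow> 'y) \<Rightarrow> (nat \<Rightarrow> bool) \<Rightarrow> ennreal" where
  "branch_value L D s b =
     (\<Sum>t. if enat t < D then ennreal (L (s (pref b t) False) (s (pref b t) True)) else 0)"

definition D_onl :: "('y \<Rightarrow> 'y \<Rightarrow> real) \<Rightarrow> ('x \<Rightarrow> 'y) set \<Rightarrow> ennreal" where
  "D_onl L H = (SUP T\<in>{(D, x, s). realizable_tree H D x s}.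
                   case T of (D, x, s) \<Rightarrow> (INF b. branch_value L D s b))"

end

theory Submission
  imports Defs
begin

lemma int_G:
  fixes A p :: real
  assumes A: "A \<ge> 1" and p: "p \<ge> 1"
  shows "(\<integral>\<^sup>+ e. ennreal (p * log 2 A - p * ln e / ln 2) * indicator {0<..<1} e \<partial>lborel)
         = ennreal (p * (log 2 A + 1 / ln 2))"
proof -
  define G where "G e = p * log 2 A - p * ln e / ln 2" for e :: real
  define F where "F e = p * log 2 A * e - p * (e * ln e - e) / ln 2" for e :: real
  have la: "log 2 A \<ge> 0" using A by simp
  have Gnn: "0 \<le> G e" if "0 < e" "e < 1" for e
  proof -
    have "ln e < 0" using that by simp
    then have "p * ln e / ln 2 \<le> 0" using p by (simp add: divide_nonpos_pos mult_nonneg_nonpos)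
    moreover have "0 \<le> p * log 2 A" using la p by simp
    ultimately show ?thesis unfolding G_def by linarith
  qed
  have h1: "(0::ereal) < 1" by simp
    have h2: "DERIV F x :> G x" if "0 < ereal x" "ereal x < 1" for x
    proof -
      have x: "0 < x" using that by simp
      show ?thesis unfolding F_def G_def
        using x by (auto intro!: derivative_eq_intros simp: field_simps)
    qed
    have h3: "isCont G x" if "0 < ereal x" "ereal x < 1" for x
      using that unfolding G_def by (auto intro!: continuous_intros)
    have h4: "AE x in lborel. 0 < ereal x \<longrightarrow> ereal x < 1 \<longrightarrow> 0 \<le> G x"
      using Gnn by auto
    have lim0: "((\<lambda>e. e * ln e) \<longlongrightarrow> 0) (at_right (0::real))"
      by real_asymp
    have h5: "((F \<circ> real_of_ereal) \<longlongrightarrow> 0) (at_right 0)"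
    proof -
      have "((\<lambda>e. p * log 2 A * e - p * (e * ln e - e) / ln 2) \<longlongrightarrow> p * log 2 A * 0 - p * (0 - 0) / ln 2) (at_right 0)"
        by (intro tendsto_intros lim0) simp
      then show ?thesis unfolding zero_ereal_def ereal_tendsto_simps F_def by simp
    qed
    have h6: "((F \<circ> real_of_ereal) \<longlongrightarrow> F 1) (at_left 1)"
      unfolding one_ereal_def ereal_tendsto_simps F_def
      by (auto intro!: tendsto_eq_intros)
  note FTC = interval_integral_FTC_nonneg[OF h1 h2 h3 h4 h5 h6]
  have E: "einterval 0 1 = {0<..<1::real}"
    by (metis einterval_eq_Icc zero_ereal_def one_ereal_def)
  have F1: "F 1 = p * (log 2 A + 1 / ln 2)" unfolding F_def by (simp add: field_simps)
  have int: "integrable lborel (\<lambda>x. indicator {0<..<1} x *\<^sub>R G x)"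
    using FTC E by (simp add: set_integrable_def)
  have "(\<integral>\<^sup>+ e. ennreal (G e) * indicator {0<..<1} e \<partial>lborel)
        = (\<integral>\<^sup>+ e. ennreal (indicator {0<..<1} e *\<^sub>R G e) \<partial>lborel)"
    by (intro nn_integral_cong) (auto split: split_indicator)
  also have "\<dots> = ennreal (integral\<^sup>L lborel (\<lambda>x. indicator {0<..<1} x *\<^sub>R G x))"
    by (intro nn_integral_eq_integral int) (auto split: split_indicator intro!: Gnn)
  also have "integral\<^sup>L lborel (\<lambda>x. indicator {0<..<1} x *\<^sub>R G x) = (LBINT x=0..1. G x)"
    by (simp add: interval_lebesgue_integral_def set_lebesgue_integral_def E)
  finally show ?thesis using FTC F1 unfolding G_def by simp
qed

definition iscov :: "('y \<Rightarrow> 'y \<Rightarrow> real) \<Rightarrow> ('x \<Rightarrow> 'y) set \<Rightarrow> ('x \<Rightarrow> 'y) set \<Rightarrow> real \<Rightarrow> ('x \<Rightarrow> 'y) set \<Rightarrow> bool" where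
  "iscov L H U e S \<longleftrightarrow> finite S \<and> S \<subseteq> H \<and> (\<forall>u\<in>U. \<exists>s\<in>S. dist_loss L u s \<le> ereal e)"

lemma covnum_alt: "covnum L H U e = (INF S\<in>{S. iscov L H U e S}. ereal (real (card S)))"
  unfolding covnum_def iscov_def by simp

lemma covnum_le: "iscov L H U e S \<Longrightarrow> covnum L H U e \<le> ereal (real (card S))"
  unfolding covnum_alt by (rule INF_lower) simp

lemma covnum_nonneg: "0 \<le> covnum L H U e"
  unfolding covnum_alt by (rule INF_greatest) simp

lemma covnum_ge1: "U \<noteq> {} \<Longrightarrow> 1 \<le> covnum L H U e"
  unfolding covnum_alt
proof (rule INF_greatest)
  fix S assume U: "U \<noteq> {}" and "S \<in> {S. iscov L H U e S}"
  then have "finite S" "S \<noteq> {}" unfolding iscov_def by auto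
  then have "card S \<ge> 1" by (simp add: Suc_leI card_gt_0_iff)
  then show "1 \<le> ereal (real (card S))" by simp
qed

lemma covnum_cases:
  "covnum L H U e = \<infinity> \<or> (\<exists>S. iscov L H U e S \<and> covnum L H U e = ereal (real (card S)))"
proof (cases "\<exists>S. iscov L H U e S")
  case False
  then have "{S. iscov L H U e S} = {}" by auto
  then have "covnum L H U e = top" unfolding covnum_alt by (simp only: INF_empty)
  then show ?thesis by (simp add: top_ereal_def)
next
  case True
  define n where "n = (LEAST n. \<exists>S. iscov L H U e S \<and> card S = n)"
  have "\<exists>S. iscov L H U e S \<and> card S = n"
  proof -
    from True obtain S0 where "iscov L H U e S0" by blast
    then have "\<exists>S. iscov L H U e S \<and> card S = card S0" by blast
    then show ?thesis unfolding n_def by (rule LeastI)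
  qed
  then obtain S where S: "iscov L H U e S" "card S = n" by blast
  have "covnum L H U e = ereal (real (card S))"
  proof (rule antisym)
    show "covnum L H U e \<le> ereal (real (card S))" by (rule covnum_le[OF S(1)])
    show "ereal (real (card S)) \<le> covnum L H U e"
      unfolding covnum_alt
    proof (rule INF_greatest)
      fix S' assume "S' \<in> {S. iscov L H U e S}"
      then have "n \<le> card S'" unfolding n_def by (auto intro: Least_le)
      then show "ereal (real (card S)) \<le> ereal (real (card S'))" using S by simp
    qed
  qed
  then show ?thesis using S by blast
qed

lemma covnum_mono_set: "U' \<subseteq> U \<Longrightarrow> covnum L H U' e \<le> covnum L H U e"
  unfolding covnum_alt by (rule INF_superset_mono) (auto simp: iscov_def, blast)

lemma covnum_antimono: "e \<le> e' \<Longrightarrow> covnum L H U e' \<le> covnum L H U e"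
  unfolding covnum_alt
  by (rule INF_superset_mono) (auto simp: iscov_def, meson ereal_less_eq(3) order_trans)

lemma log2_ext_mono:
  assumes "N \<le> N'" "0 \<le> N"
  shows "log2_ext N \<le> log2_ext N'"
proof (cases "N' = \<infinity>")
  case True then show ?thesis by (simp add: log2_ext_def)
next
  case False
  then obtain r' where r': "N' = ereal r'" using assms by (cases N') auto
  obtain r where r: "N = ereal r" using assms r' by (cases N) auto
  have "r \<le> r'" "0 \<le> r" using assms r r' by auto
  show ?thesis
  proof (cases "r = 0")
    case True then show ?thesis using r r' by (simp add: log2_ext_def log_def)
  next
    case False
    then have "log 2 r \<le> log 2 r'" using \<open>r \<le> r'\<close> \<open>0 \<le> r\<close> by simp
    then show ?thesis using r r' by (simp add: log2_ext_def ennreal_leI)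
  qed
qed

lemma log2_ext_ereal: "log2_ext (ereal r) = ennreal (log 2 r)"
  by (simp add: log2_ext_def)

lemma part1:
  fixes L :: "'y \<Rightarrow> 'y \<Rightarrow> real" and H :: "('x \<Rightarrow> 'y) set" and A p :: real
  assumes "diam_loss L H \<le> 1"
    and A: "A \<ge> 1" and p: "p \<ge> 1"
    and cov: "\<And>\<epsilon>. 0 < \<epsilon> \<Longrightarrow> \<epsilon> \<le> 1 \<Longrightarrow> covnum L H H \<epsilon> \<le> ereal ((A / \<epsilon>) powr p)"
  shows "Phi L H H \<le> ennreal (p * (log 2 A + 1 / ln 2))"
proof -
  have AE: "AE e in lborel. e \<noteq> 0 \<and> e \<noteq> 1"
    using AE_lborel_singleton[of 0] AE_lborel_singleton[of 1] by eventually_elim simp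
  have "Phi L H H \<le> (\<integral>\<^sup>+ e. ennreal (p * log 2 A - p * ln e / ln 2) * indicator {0<..<1} e \<partial>lborel)"
    unfolding Phi_def
  proof (rule nn_integral_mono_AE)
    show "AE e in lborel. log2_ext (covnum L H H e) * indicator {e. 0 \<le> e \<and> ereal e \<le> diam_loss L H} e
       \<le> ennreal (p * log 2 A - p * ln e / ln 2) * indicator {0<..<1} e"
      using AE
    proof eventually_elim
      case (elim e)
      show ?case
      proof (cases "0 \<le> e \<and> ereal e \<le> diam_loss L H")
        case False then show ?thesis by simp
      next
        case True
        then have "ereal e \<le> 1" using assms(1) by (meson order_trans)
        then have e: "0 < e" "e < 1" using True elim by auto
        have "log2_ext (covnum L H H e) \<le> log2_ext (ereal ((A / e) powr p))"
          by (rule log2_ext_mono[OF cov covnum_nonneg]) (use e in auto)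
        also have "\<dots> = ennreal (p * log 2 A - p * ln e / ln 2)"
          using e A by (simp add: log2_ext_ereal log_powr log_divide log_def ln_div field_simps)
        finally show ?thesis using e True by simp
      qed
    qed
  qed
  also have "\<dots> = ennreal (p * (log 2 A + 1 / ln 2))" by (rule int_G[OF A p])
  finally show ?thesis .
qed

lemma downset_borel:
  fixes S :: "real set"
  assumes down: "\<And>x z. z \<le> x \<Longrightarrow> x \<in> S \<Longrightarrow> z \<in> S"
  shows "S \<in> sets borel"
proof (cases "S = UNIV \<or> S = {}")
  case True then show ?thesis by auto
next
  case False
  then obtain w y where w: "w \<notin> S" and y: "y \<in> S" by auto
  have ub: "x \<le> w" if "x \<in> S" for x using down[of w x] that w by force
  have bdd: "bdd_above S" using ub by (rule bdd_aboveI)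
  define a where "a = Sup S"
  have lt: "x \<in> S" if "x < a" for x
  proof -
    from that obtain s where "s \<in> S" "x < s" unfolding a_def
      using less_cSup_iff[OF _ bdd, of x] y by auto
    then show ?thesis using down[of x s] by auto
  qed
  have gt: "x \<notin> S" if "a < x" for x
    using that cSup_upper[OF _ bdd, of x] unfolding a_def by force
  show ?thesis
  proof (cases "a \<in> S")
    case True
    have "S = {..a}"
    proof (rule set_eqI)
      fix x show "x \<in> S \<longleftrightarrow> x \<in> {..a}"
        using lt[of x] gt[of x] True by (cases x a rule: linorder_cases) auto
    qed
    then show ?thesis by simp
  next
    case False
    have "S = {..<a}"
    proof (rule set_eqI)
      fix x show "x \<in> S \<longleftrightarrow> x \<in> {..<a}"
        using lt[of x] gt[of x] False by (cases x a rule: linorder_cases) auto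
    qed
    then show ?thesis by simp
  qed
qed

lemma antimono_borel:
  fixes g :: "real \<Rightarrow> ennreal"
  assumes "\<And>x y. x \<le> y \<Longrightarrow> g y \<le> g x"
  shows "g \<in> borel_measurable borel"
proof (rule borel_measurableI_greater)
  fix y
  have "{x. y < g x} \<in> sets borel"
    by (rule downset_borel) (use assms in \<open>auto intro: less_le_trans\<close>)
  then show "{x \<in> space borel. y < g x} \<in> sets borel" by simp
qed

lemma Phi_meas:
  "(\<lambda>e. log2_ext (covnum L H U e) * indicator {e. 0 \<le> e \<and> ereal e \<le> d} e) \<in> borel_measurable lborel"
proof -
  have m1: "(\<lambda>e. log2_ext (covnum L H U e)) \<in> borel_measurable borel"
    by (rule antimono_borel) (intro log2_ext_mono covnum_antimono covnum_nonneg)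
  have dS: "{e. ereal e \<le> d} \<in> sets borel"
    by (rule downset_borel) (simp, meson ereal_less_eq(3) order_trans)
  then have "{e. 0 \<le> e \<and> ereal e \<le> d} \<in> sets borel"
    using sets.Int[OF atLeast_borel[of 0] dS] by (simp add: Collect_conj_eq atLeast_def)
  then have m2: "indicator {e. 0 \<le> e \<and> ereal e \<le> d} \<in> borel_measurable borel"
    by (rule borel_measurable_indicator)
  show ?thesis using m1 m2 by (simp add: measurable_lborel1)
qed

lemma dist_loss_ge: "ereal (L (f x) (g x)) \<le> dist_loss L f g"
  unfolding dist_loss_def by (rule SUP_upper) simp

lemma log_arith:
  fixes a b n :: real
  assumes "1 \<le> a" "1 \<le> b" "a + b \<le> n"
  shows "log 2 a + log 2 b + 2 \<le> 2 * log 2 n"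
proof -
  have "0 \<le> (a - b) * (a - b)" by simp
  then have "4 * a * b \<le> (a + b) * (a + b)" by (simp add: algebra_simps)
  also have "\<dots> \<le> n * n" using assms by (intro mult_mono) auto
  finally have *: "4 * a * b \<le> n * n" .
  have l4: "log 2 (4::real) = 2"
  proof -
    have "log 2 (4::real) = log 2 (2 ^ 2)" by simp
    also have "\<dots> = 2" using log_pow_cancel[of "2::real" 2] by simp
    finally show ?thesis by simp
  qed
  have "log 2 a + log 2 b + 2 = log 2 (4 * a * b)"
    using assms by (simp add: log_mult l4)
  also have "\<dots> \<le> log 2 (n * n)" using * assms by simp
  also have "\<dots> = 2 * log 2 n" using assms by (simp add: log_mult)
  finally show ?thesis .
qed

lemma sep_point:
  assumes apm: "approx_pseudo_metric c L" and c: "c \<ge> 1"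
    and e: "0 \<le> e"
    and U0: "U0 \<noteq> {}" "U0 \<subseteq> U" and U1: "U1 \<noteq> {}" "U1 \<subseteq> U"
    and y0: "\<forall>h\<in>U0. h xu = y0" and y1: "\<forall>h\<in>U1. h xu = y1"
  shows "log2_ext (covnum L H U0 e) + log2_ext (covnum L H U1 e)
          + (if e < L y0 y1 / (2 * c) then 2 else 0) \<le> 2 * log2_ext (covnum L H U e)"
proof (cases "covnum L H U e = \<infinity>")
  case True
  then show ?thesis by (simp add: log2_ext_def ennreal_mult_eq_top_iff)
next
  case False
  then obtain S where S: "iscov L H U e S" "covnum L H U e = ereal (real (card S))"
    using covnum_cases by blast
  show ?thesis
  proof (cases "e < L y0 y1 / (2 * c)")
    case False
    have "log2_ext (covnum L H U0 e) \<le> log2_ext (covnum L H U e)"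
      by (intro log2_ext_mono covnum_mono_set covnum_nonneg U0)
    moreover have "log2_ext (covnum L H U1 e) \<le> log2_ext (covnum L H U e)"
      by (intro log2_ext_mono covnum_mono_set covnum_nonneg U1)
    ultimately have ineq: "log2_ext (covnum L H U0 e) + log2_ext (covnum L H U1 e)
        \<le> log2_ext (covnum L H U e) + log2_ext (covnum L H U e)" by (rule add_mono)
    have eq1: "log2_ext (covnum L H U0 e) + log2_ext (covnum L H U1 e)
          + (if e < L y0 y1 / (2 * c) then 2 else 0) = log2_ext (covnum L H U0 e) + log2_ext (covnum L H U1 e)"
      using False by simp
    have eq2: "2 * log2_ext (covnum L H U e) = log2_ext (covnum L H U e) + log2_ext (covnum L H U e)"
      by (rule mult_2)
    show ?thesis by (subst eq1, subst eq2, rule ineq)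
  next
    case True
    define S0 where "S0 = {t\<in>S. \<exists>h\<in>U0. dist_loss L h t \<le> ereal e}"
    define S1 where "S1 = {t\<in>S. \<exists>h\<in>U1. dist_loss L h t \<le> ereal e}"
    have fin: "finite S" "S \<subseteq> H" and covS: "\<forall>u\<in>U. \<exists>s\<in>S. dist_loss L u s \<le> ereal e"
      using S(1) unfolding iscov_def by auto
    have cov0: "iscov L H U0 e S0"
      unfolding iscov_def
    proof (intro conjI ballI)
      show "finite S0" using fin by (simp add: S0_def)
      show "S0 \<subseteq> H" using fin by (auto simp: S0_def)
      fix u assume u: "u \<in> U0"
      then obtain s where "s \<in> S" "dist_loss L u s \<le> ereal e" using covS U0 by blast
      then show "\<exists>s\<in>S0. dist_loss L u s \<le> ereal e" using u unfolding S0_def by blast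
    qed
    have cov1: "iscov L H U1 e S1"
      unfolding iscov_def
    proof (intro conjI ballI)
      show "finite S1" using fin by (simp add: S1_def)
      show "S1 \<subseteq> H" using fin by (auto simp: S1_def)
      fix u assume u: "u \<in> U1"
      then obtain s where "s \<in> S" "dist_loss L u s \<le> ereal e" using covS U1 by blast
      then show "\<exists>s\<in>S1. dist_loss L u s \<le> ereal e" using u unfolding S1_def by blast
    qed
    have disj: "S0 \<inter> S1 = {}"
    proof (rule ccontr)
      assume "S0 \<inter> S1 \<noteq> {}"
      then obtain t h0 h1 where h0: "h0 \<in> U0" "dist_loss L h0 t \<le> ereal e"
        and h1: "h1 \<in> U1" "dist_loss L h1 t \<le> ereal e"
        unfolding S0_def S1_def by blast
      have a0: "L (h0 xu) (t xu) \<le> e" using dist_loss_ge[of L h0 xu t] h0(2) by (meson ereal_less_eq(3) order_trans)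
      have a1: "L (h1 xu) (t xu) \<le> e" using dist_loss_ge[of L h1 xu t] h1(2) by (meson ereal_less_eq(3) order_trans)
      have "L y0 y1 = L (h0 xu) (h1 xu)" using y0 y1 h0 h1 by simp
      also have "\<dots> \<le> c * (L (h0 xu) (t xu) + L (h1 xu) (t xu))"
        using apm unfolding approx_pseudo_metric_def by blast
      also have "\<dots> \<le> c * (e + e)" using a0 a1 c by (intro mult_left_mono) auto
      finally have "L y0 y1 \<le> 2 * c * e" by simp
      moreover have "2 * c * e < L y0 y1" using True c by (simp add: field_simps)
      ultimately show False by simp
    qed
    have ne0: "S0 \<noteq> {}" using cov0 U0 unfolding iscov_def by blast
    have ne1: "S1 \<noteq> {}" using cov1 U1 unfolding iscov_def by blast
    have f0: "finite S0" and f1: "finite S1" using fin unfolding S0_def S1_def by auto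
    have ca: "1 \<le> card S0" using ne0 f0 by (simp add: Suc_leI card_gt_0_iff)
    have cb: "1 \<le> card S1" using ne1 f1 by (simp add: Suc_leI card_gt_0_iff)
    have "card S0 + card S1 = card (S0 \<union> S1)" using f0 f1 disj by (simp add: card_Un_disjoint)
    also have "\<dots> \<le> card S" using fin by (intro card_mono) (auto simp: S0_def S1_def)
    finally have cab: "card S0 + card S1 \<le> card S" .
    have la: "0 \<le> log 2 (real (card S0))" "0 \<le> log 2 (real (card S1))" using ca cb by auto
    have ar: "log 2 (card S0) + log 2 (card S1) + 2 \<le> 2 * log 2 (card S)"
      by (rule log_arith) (use ca cb cab in auto)
    have "log2_ext (covnum L H U0 e) \<le> ennreal (log 2 (card S0))"
      using log2_ext_mono[OF covnum_le[OF cov0] covnum_nonneg] by (simp add: log2_ext_ereal)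
    moreover have "log2_ext (covnum L H U1 e) \<le> ennreal (log 2 (card S1))"
      using log2_ext_mono[OF covnum_le[OF cov1] covnum_nonneg] by (simp add: log2_ext_ereal)
    ultimately have "log2_ext (covnum L H U0 e) + log2_ext (covnum L H U1 e) + 2
       \<le> ennreal (log 2 (card S0)) + ennreal (log 2 (card S1)) + ennreal 2"
      by (intro add_mono) auto
    also have "\<dots> = ennreal (log 2 (card S0) + log 2 (card S1) + 2)"
      using la by (simp add: ennreal_plus)
    also have "\<dots> \<le> ennreal (2 * log 2 (card S))" using ar by (rule ennreal_leI)
    also have "\<dots> = 2 * log2_ext (covnum L H U e)"
      using S(2) ennreal_mult'[of 2 "log 2 (card S)"] by (simp add: log2_ext_ereal)
    finally show ?thesis using True by simp
  qed
qed

lemma L_nonneg: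
  assumes apm: "approx_pseudo_metric c L" and c: "c \<ge> 1"
  shows "0 \<le> L a b"
proof -
  have "L a a \<le> c * (L a b + L a b)" using apm unfolding approx_pseudo_metric_def by blast
  moreover have "L a a = 0" using apm unfolding approx_pseudo_metric_def by blast
  ultimately have "0 \<le> c * (2 * L a b)" by simp
  then show ?thesis using c by (simp add: zero_le_mult_iff)
qed

lemma sep_int:
  assumes apm: "approx_pseudo_metric c L" and c: "c \<ge> 1"
    and U0: "U0 \<noteq> {}" "U0 \<subseteq> U" and U1: "U1 \<noteq> {}" "U1 \<subseteq> U" and UH: "U \<subseteq> H"
    and y0: "\<forall>h\<in>U0. h xu = y0" and y1: "\<forall>h\<in>U1. h xu = y1"
  shows "min (Phi L H U0) (Phi L H U1) + ennreal (L y0 y1 / (2 * c)) \<le> Phi L H U"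
proof -
  define a where "a = L y0 y1 / (2 * c)"
  define d where "d = diam_loss L H"
  define R where "R = {e. 0 \<le> e \<and> ereal e \<le> d}"
  define g where "g V e = log2_ext (covnum L H V e) * indicator R e" for V e
  have gam: "0 \<le> L y0 y1" by (rule L_nonneg[OF apm c])
  have a0: "0 \<le> a" unfolding a_def using gam c by simp
  have "1 * L y0 y1 \<le> (2 * c) * L y0 y1" by (rule mult_right_mono) (use c gam in auto)
  then have ale: "a \<le> L y0 y1" unfolding a_def using c by (simp add: divide_le_eq mult.commute)
  obtain h0 h1 where h0: "h0 \<in> U0" and h1: "h1 \<in> U1" using U0 U1 by blast
  have "ereal (L y0 y1) = ereal (L (h0 xu) (h1 xu))" using h0 h1 y0 y1 by simp
  also have "\<dots> \<le> dist_loss L h0 h1" by (rule dist_loss_ge)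
  also have "\<dots> \<le> d" unfolding d_def diam_loss_def
    using h0 h1 U0 U1 UH by (intro SUP_upper2[of h0] SUP_upper[of h1]) auto
  finally have ad: "ereal a \<le> d" using ale by (meson ereal_less_eq(3) order_trans)
  have meas: "g V \<in> borel_measurable lborel" for V
    unfolding g_def R_def by (rule Phi_meas)
  have PhiG: "Phi L H V = integral\<^sup>N lborel (g V)" for V
    unfolding Phi_def g_def R_def d_def by simp
  have pw: "g U0 e + g U1 e + 2 * indicator {0..<a} e \<le> 2 * g U e" for e
  proof (cases "e \<in> R")
    case True
    then have e0: "0 \<le> e" unfolding R_def by simp
    have "2 * (indicator {0..<a} e :: ennreal) = (if e < L y0 y1 / (2 * c) then 2 else 0)"
      using e0 unfolding a_def by (simp add: indicator_def)
    moreover have "g V e = log2_ext (covnum L H V e)" for V unfolding g_def using True by simp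
    ultimately show ?thesis
      using sep_point[OF apm c e0 U0 U1 y0 y1, of H] by simp
  next
    case False
    have "e \<notin> {0..<a}"
    proof
      assume "e \<in> {0..<a}"
      then have "0 \<le> e" "ereal e \<le> d" using ad by auto (meson ereal_less_eq(3) order_trans less_imp_le)
      then show False using False unfolding R_def by simp
    qed
    then show ?thesis using False unfolding g_def by simp
  qed
  have "Phi L H U0 + Phi L H U1 + 2 * ennreal a
      = integral\<^sup>N lborel (\<lambda>e. g U0 e + g U1 e + 2 * indicator {0..<a} e)"
  proof -
    have "integral\<^sup>N lborel (\<lambda>e. g U0 e + g U1 e + 2 * indicator {0..<a} e)
        = integral\<^sup>N lborel (\<lambda>e. g U0 e + g U1 e) + integral\<^sup>N lborel (\<lambda>e. 2 * indicator {0..<a} e)"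
      using meas by (intro nn_integral_add) auto
    also have "integral\<^sup>N lborel (\<lambda>e. g U0 e + g U1 e) = integral\<^sup>N lborel (g U0) + integral\<^sup>N lborel (g U1)"
      using meas by (intro nn_integral_add) auto
    also have "integral\<^sup>N lborel (\<lambda>e. 2 * indicator {0..<a} e) = 2 * ennreal a"
      using a0 by (subst nn_integral_cmult_indicator) auto
    finally show ?thesis unfolding PhiG by simp
  qed
  also have "\<dots> \<le> integral\<^sup>N lborel (\<lambda>e. 2 * g U e)"
    by (intro nn_integral_mono pw)
  also have "\<dots> = 2 * Phi L H U"
    unfolding PhiG using meas by (intro nn_integral_cmult) auto
  finally have main: "Phi L H U0 + Phi L H U1 + 2 * ennreal a \<le> 2 * Phi L H U" .
  have "2 * min (Phi L H U0) (Phi L H U1) \<le> Phi L H U0 + Phi L H U1"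
    by (simp add: mult_2 add_mono)
  then have "2 * (min (Phi L H U0) (Phi L H U1) + ennreal a) \<le> 2 * Phi L H U"
    using main by (simp add: distrib_left) (meson add_right_mono order_trans)
  then show ?thesis unfolding a_def by (subst (asm) ennreal_mult_le_mult_iff) auto
qed


definition Vn :: "('x \<Rightarrow> 'y) set \<Rightarrow> (bool list \<Rightarrow> 'x) \<Rightarrow> (bool list \<Rightarrow> bool \<Rightarrow> 'y) \<Rightarrow> bool list \<Rightarrow> ('x \<Rightarrow> 'y) set" where
  "Vn H x s u = {h\<in>H. \<forall>t<length u. h (x (take t u)) = s (take t u) (u ! t)}"

lemma Vn_Nil: "Vn H x s [] = H"
  unfolding Vn_def by simp

lemma Vn_H: "Vn H x s u \<subseteq> H"
  unfolding Vn_def by auto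

lemma Vn_snoc_sub: "Vn H x s (u @ [i]) \<subseteq> Vn H x s u"
  unfolding Vn_def by (auto simp: nth_append)

lemma Vn_snoc_val:
  assumes "h \<in> Vn H x s (u @ [i])" shows "h (x u) = s u i"
proof -
  have "\<forall>t<length (u @ [i]). h (x (take t (u @ [i]))) = s (take t (u @ [i])) ((u @ [i]) ! t)"
    using assms unfolding Vn_def by blast
  then have "length u < length (u @ [i]) \<longrightarrow> h (x (take (length u) (u @ [i]))) = s (take (length u) (u @ [i])) ((u @ [i]) ! length u)"
    by (rule spec)
  then show ?thesis by simp
qed

lemma pref_length[simp]: "length (pref b n) = n"
  unfolding pref_def by simp

lemma pref_take: "t \<le> n \<Longrightarrow> take t (pref b n) = pref b t"
  unfolding pref_def by (simp add: take_map)

lemma pref_nth: "t < n \<Longrightarrow> pref b n ! t = b t"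
  unfolding pref_def by simp

lemma pref_Suc: "pref b (Suc n) = pref b n @ [b n]"
  unfolding pref_def by simp

lemma Vn_pref_nonempty:
  assumes "realizable_tree H D x s" "enat n \<le> D"
  shows "Vn H x s (pref b n) \<noteq> {}"
proof -
  obtain h where "h \<in> H" "\<forall>t<n. h (x (pref b t)) = s (pref b t) (b t)"
    using assms unfolding realizable_tree_def by blast
  then have "h \<in> Vn H x s (pref b n)"
    unfolding Vn_def by (simp add: pref_take pref_nth)
  then show ?thesis by blast
qed

lemma Vn_child_nonempty:
  assumes "realizable_tree H D x s" "enat (Suc n) \<le> D"
  shows "Vn H x s (pref b n @ [i]) \<noteq> {}"
proof -
  define b' where "b' t = (if t < n then b t else i)" for t
  have "pref b' (Suc n) = pref b n @ [i]"
    unfolding pref_def b'_def by simp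
  then show ?thesis using Vn_pref_nonempty[OF assms, of b'] by simp
qed

lemma tree_bound:
  assumes apm: "approx_pseudo_metric c L" and c: "c \<ge> 1"
    and real: "realizable_tree H D x s"
  shows "\<exists>b. branch_value L D s b \<le> ennreal (2 * c) * Phi L H H"
proof -
  define V where "V u = Vn H x s u" for u
  define ch where "ch u = (Phi L H (V (u @ [True])) < Phi L H (V (u @ [False])))" for u
  define P where "P = rec_nat [] (\<lambda>n u. u @ [ch u])"
  have P0: "P 0 = []" and PS: "P (Suc n) = P n @ [ch (P n)]" for n by (simp_all add: P_def)
  define b where "b t = ch (P t)" for t
  have bP: "pref b n = P n" for n
  proof (induction n)
    case 0 then show ?case by (simp add: pref_def P0)
  next
    case (Suc n) then show ?case by (simp add: pref_Suc PS b_def)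
  qed
  define g where "g t = L (s (P t) False) (s (P t) True)" for t
  have g0: "0 \<le> g t" for t unfolding g_def by (rule L_nonneg[OF apm c])
  have step: "Phi L H (V (P (Suc n))) + ennreal (g n / (2 * c)) \<le> Phi L H (V (P n))"
    if n: "enat (Suc n) \<le> D" for n
  proof -
    have ne0: "V (P n @ [False]) \<noteq> {}" using Vn_child_nonempty[OF real n, of b False] bP V_def by simp
    have ne1: "V (P n @ [True]) \<noteq> {}" using Vn_child_nonempty[OF real n, of b True] bP V_def by simp
    have y0: "\<forall>h\<in>V (P n @ [False]). h (x (P n)) = s (P n) False" unfolding V_def using Vn_snoc_val by blast
    have y1: "\<forall>h\<in>V (P n @ [True]). h (x (P n)) = s (P n) True" unfolding V_def using Vn_snoc_val by blast
    have sub0: "V (P n @ [False]) \<subseteq> V (P n)" unfolding V_def by (rule Vn_snoc_sub)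
    have sub1: "V (P n @ [True]) \<subseteq> V (P n)" unfolding V_def by (rule Vn_snoc_sub)
    have VH: "V (P n) \<subseteq> H" unfolding V_def by (rule Vn_H)
    have sep: "min (Phi L H (V (P n @ [False]))) (Phi L H (V (P n @ [True]))) + ennreal (g n / (2 * c))
        \<le> Phi L H (V (P n))"
      unfolding g_def
      by (rule sep_int[OF apm c ne0 sub0 ne1 sub1 VH y0 y1])
    have "Phi L H (V (P (Suc n))) = min (Phi L H (V (P n @ [False]))) (Phi L H (V (P n @ [True])))"
      unfolding PS ch_def
      by (cases "Phi L H (V (P n @ [True])) < Phi L H (V (P n @ [False]))") (auto simp: min_def)
    then show ?thesis using sep by simp
  qed
  have main: "Phi L H (V (P n)) + (\<Sum>t<n. ennreal (g t / (2 * c))) \<le> Phi L H H" if "enat n \<le> D" for n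
    using that
  proof (induction n)
    case 0 then show ?case by (simp add: P0 V_def Vn_Nil)
  next
    case (Suc n)
    have n: "enat n \<le> D" using Suc.prems by (meson enat_ord_simps(1) le_SucI order.refl order_trans)
    have "Phi L H (V (P (Suc n))) + (\<Sum>t<Suc n. ennreal (g t / (2 * c)))
        = (Phi L H (V (P (Suc n))) + ennreal (g n / (2 * c))) + (\<Sum>t<n. ennreal (g t / (2 * c)))"
      by (simp only: sum.lessThan_Suc ac_simps)
    also have "\<dots> \<le> Phi L H (V (P n)) + (\<Sum>t<n. ennreal (g t / (2 * c)))"
      by (intro add_right_mono step Suc.prems)
    also have "\<dots> \<le> Phi L H H" by (rule Suc.IH[OF n])
    finally show ?case .
  qed
  show ?thesis
  proof (intro exI)
    show "branch_value L D s b \<le> ennreal (2 * c) * Phi L H H"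
      unfolding branch_value_def
    proof (rule suminf_le_const)
      show "summable (\<lambda>t. if enat t < D then ennreal (L (s (pref b t) False) (s (pref b t) True)) else 0)"
        by (rule summableI)
      fix n
      obtain m where m: "enat m \<le> D" "{t\<in>{..<n}. enat t < D} = {..<m}"
      proof (cases D)
        case (enat k)
        have "{t\<in>{..<n}. enat t < D} = {..<min n k}" using enat by auto
        moreover have "enat (min n k) \<le> D" using enat by simp
        ultimately show ?thesis using that by blast
      next
        case infinity then show ?thesis using that[of n] by auto
      qed
      have "(\<Sum>t<n. if enat t < D then ennreal (L (s (pref b t) False) (s (pref b t) True)) else 0)
          = (\<Sum>t<n. if enat t < D then ennreal (g t) else 0)"
        by (intro sum.cong refl) (simp only: bP g_def)
      also have "\<dots> = (\<Sum>t\<in>{t\<in>{..<n}. enat t < D}. ennreal (g t))"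
        by (rule sum.inter_filter[symmetric]) simp
      also have "\<dots> = (\<Sum>t<m. ennreal (g t))" using m by simp
      also have "\<dots> = ennreal (2 * c) * (\<Sum>t<m. ennreal (g t / (2 * c)))"
        unfolding sum_distrib_left
      proof (intro sum.cong refl)
        fix t
        have "ennreal (2 * c) * ennreal (g t / (2 * c)) = ennreal (2 * c * (g t / (2 * c)))"
          by (rule ennreal_mult[symmetric]) (use c g0[of t] in auto)
        also have "2 * c * (g t / (2 * c)) = g t" using c by simp
        finally show "ennreal (g t) = ennreal (2 * c) * ennreal (g t / (2 * c))" by (rule sym)
      qed
      also have "\<dots> \<le> ennreal (2 * c) * Phi L H H"
      proof (intro mult_left_mono)
        have "(\<Sum>t<m. ennreal (g t / (2 * c))) \<le> Phi L H (V (P m)) + (\<Sum>t<m. ennreal (g t / (2 * c)))"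
          by simp
        also have "\<dots> \<le> Phi L H H" by (rule main[OF m(1)])
        finally show "(\<Sum>t<m. ennreal (g t / (2 * c))) \<le> Phi L H H" .
      qed simp
      finally show "(\<Sum>t<n. if enat t < D then ennreal (L (s (pref b t) False) (s (pref b t) True)) else 0)
          \<le> ennreal (2 * c) * Phi L H H" .
    qed
  qed
qed


theorem corollary1p2:
  fixes L :: "'y \<Rightarrow> 'y \<Rightarrow> real" and H :: "('x \<Rightarrow> 'y) set" and c A p :: real
  assumes "c \<ge> 1" and "approx_pseudo_metric c L"
    and "diam_loss L H \<le> 1"
    and "A \<ge> 1" and "p \<ge> 1"
    and "\<And>\<epsilon>. 0 < \<epsilon> \<Longrightarrow> \<epsilon> \<le> 1 \<Longrightarrow> covnum L H H \<epsilon> \<le> ereal ((A / \<epsilon>) powr p)"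
  shows "Phi L H H \<le> ennreal (p * (log 2 A + 1 / ln 2)) \<and>
           D_onl L H \<le> ennreal (4 * c * p * (log 2 A + 1 / ln 2))"
proof -
  define K where "K = p * (log 2 A + 1 / ln 2)"
  have P1: "Phi L H H \<le> ennreal K" unfolding K_def by (rule part1[OF assms(3-6)])
  have "0 \<le> log 2 A" using assms(4) by simp
  moreover have "0 < 1 / ln (2::real)" by simp
  ultimately have X0: "0 \<le> log 2 A + 1 / ln 2" by linarith
  have K0: "0 \<le> K" unfolding K_def using X0 assms(5) by simp
  have "D_onl L H \<le> ennreal (2 * c) * Phi L H H"
    unfolding D_onl_def
  proof (rule SUP_least)
    fix T assume "T \<in> {(D, x, s). realizable_tree H D x s}"
    then obtain D x s where T: "T = (D, x, s)" and r: "realizable_tree H D x s" by auto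
    obtain b where bb: "branch_value L D s b \<le> ennreal (2 * c) * Phi L H H"
      using tree_bound[OF assms(2) assms(1) r] by blast
    have "(INF b. branch_value L D s b) \<le> ennreal (2 * c) * Phi L H H"
      using bb by (rule INF_lower2[of b UNIV, OF UNIV_I])
    then show "(case T of (D, x, s) \<Rightarrow> INF b. branch_value L D s b) \<le> ennreal (2 * c) * Phi L H H"
      unfolding T by simp
  qed
  also have "\<dots> \<le> ennreal (2 * c) * ennreal K" by (rule mult_left_mono[OF P1]) simp
  also have "\<dots> = ennreal (2 * c * K)" using assms(1) K0 by (simp add: ennreal_mult)
  also have "\<dots> \<le> ennreal (4 * c * p * (log 2 A + 1 / ln 2))"
  proof (rule ennreal_leI)
    have "4 * c * p * (log 2 A + 1 / ln 2) = 2 * (2 * c * K)" unfolding K_def by (simp add: algebra_simps)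
    moreover have "0 \<le> 2 * c * K" using assms(1) K0 by simp
    ultimately show "2 * c * K \<le> 4 * c * p * (log 2 A + 1 / ln 2)" by linarith
  qed
  finally show ?thesis using P1 unfolding K_def by simp
qed

end
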